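(* Let $G=(V,E)$ be a directed graph, $s\neq t$ vertices and $k\ge 5$ an integer, and let $e(u,v)$ be an undetermined edge. Then $e(u,v)$ is an edge of $SPG_k(s,t)$ if and only if there exist an integer $l$ and vertices $v_2,v_3,\dots,v_{l-2}$ forming a simple path $q^*$ in $G$ of length $l-4\le k-4$ having $e(u,v)$ as one of its edges, such that (1) $v_2\in D$ and $v_{l-2}\in A$; and (2) there exist $v_1\in In_D(v_2)$ and $v_{l-1}\in Out_A(v_{l-2})$ such that the vertices $s,v_1,v_2,\dots,v_{l-1},t$ are pairwise distinct.
   Context: A path from $x$ to $y$ in $G$ is a vertex sequence $x=v_0,\dots,v_m=y$ with $(v_{i-1},v_i)\in E$; its length is $m$ and $V(p)$, $E(p)$ are its vertex and edge sets. A simple path has no repeated vertex. $SPG_k(s,t)$ is the subgraph of $G$ formed by the union of vertex sets and edge sets of all simple paths from $s$ to $t$ of length at most $k$. For a vertex $u$ and integer $l\ge 0$, $EV^*_l(s,u)$ exists iff there is at least one simple path from $s$ to $u$ of length at most $l$ not containing $t$, and then $EV^*_l(s,u)$ is the intersection of $V(p)$ over all such paths. Symmetrically, $EV^*_l(v,t)$ exists iff there is at least one simple path from $v$ to $t$ of length at most $l$ not containing $s$, and then it is the intersection of $V(p)$ over all such paths. The upper-bound graph $SPG^u_k(s,t)$ is the subgraph of $G$ whose edges are exactly those $e(u,v)\in E$ for which there exist integers $k_f,k_b\ge 0$ with $EV^*_{k_f}(s,u)$ and $EV^*_{k_b}(v,t)$ existing, $k_f+1+k_b\le k$, and $EV^*_{k_f}(s,u)\cap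 EV^*_{k_b}(v,t)=\emptyset$. An edge $e(u,v)\in E$ is definite if one of: (a) $u=s$ and $EV^*_{k-1}(v,t)$ exists; (b) $v=t$ and $EV^*_{k-1}(s,u)$ exists; (c) $EV^*_1(s,u)$ and $EV^*_{k-2}(v,t)$ exist and $u\notin EV^*_{k-2}(v,t)$; (d) $EV^*_1(v,t)$ and $EV^*_{k-2}(s,u)$ exist and $v\notin EV^*_{k-2}(s,u)$. An undetermined edge is an edge of $SPG^u_k(s,t)$ that is not definite. The departure set $D$ consists of vertices $w$ having an in-neighbour $x$ such that $x,w,s,t$ are pairwise distinct and $e(s,x),e(x,w)$ are edges of $SPG^u_k(s,t)$; for $w\in D$, $In_D(w)$ is the set of all such $x$. The arrival set $A$ consists of vertices $w$ having an out-neighbour $y$ such that $w,y,s,t$ are pairwise distinct and $e(w,y),e(y,t)$ are edges of $SPG^u_k(s,t)$; for $w\in A$, $Out_A(w)$ is the set of all such $y$. *)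

theory Defs
  imports Main
begin

fun walk :: "('a \<times> 'a) set \<Rightarrow> 'a list \<Rightarrow> bool" where
  "walk E [] = False"
| "walk E [x] = True"
| "walk E (x # y # ys) = ((x, y) \<in> E \<and> walk E (y # ys))"

definition is_path :: "('a \<times> 'a) set \<Rightarrow> 'a list \<Rightarrow> 'a \<Rightarrow> 'a \<Rightarrow> bool" where
  "is_path E p x y \<longleftrightarrow> walk E p \<and> hd p = x \<and> last p = y"

definition plen :: "'a list \<Rightarrow> nat" where
  "plen p = length p - 1"

definition path_edges :: "'a list \<Rightarrow> ('a \<times> 'a) set" where
  "path_edges p = set (zip p (tl p))"

definition SPG_edges :: "('a \<times> 'a) set \<Rightarrow> 'a \<Rightarrow> 'a \<Rightarrow> nat \<Rightarrow> ('a \<times> 'a) set" where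
  "SPG_edges E s t k = \<Union> {path_edges p | p. is_path E p s t \<and> distinct p \<and> plen p \<le> k}"

definition EVf_ex :: "('a \<times> 'a) set \<Rightarrow> 'a \<Rightarrow> 'a \<Rightarrow> nat \<Rightarrow> 'a \<Rightarrow> bool" where
  "EVf_ex E s t l u \<longleftrightarrow> (\<exists>p. is_path E p s u \<and> distinct p \<and> plen p \<le> l \<and> t \<notin> set p)"

definition EVf :: "('a \<times> 'a) set \<Rightarrow> 'a \<Rightarrow> 'a \<Rightarrow> nat \<Rightarrow> 'a \<Rightarrow> 'a set" where
  "EVf E s t l u = \<Inter> {set p | p. is_path E p s u \<and> distinct p \<and> plen p \<le> l \<and> t \<notin> set p}"

definition EVb_ex :: "('a \<times> 'a) set \<Rightarrow> 'a \<Rightarrow> 'a \<Rightarrow> nat \<Rightarrow> 'a \<Rightarrow> bool" where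
  "EVb_ex E s t l v \<longleftrightarrow> (\<exists>p. is_path E p v t \<and> distinct p \<and> plen p \<le> l \<and> s \<notin> set p)"

definition EVb :: "('a \<times> 'a) set \<Rightarrow> 'a \<Rightarrow> 'a \<Rightarrow> nat \<Rightarrow> 'a \<Rightarrow> 'a set" where
  "EVb E s t l v = \<Inter> {set p | p. is_path E p v t \<and> distinct p \<and> plen p \<le> l \<and> s \<notin> set p}"

definition SPGu_edges :: "('a \<times> 'a) set \<Rightarrow> 'a \<Rightarrow> 'a \<Rightarrow> nat \<Rightarrow> ('a \<times> 'a) set" where
  "SPGu_edges E s t k = {(u, v) \<in> E. \<exists>kf kb. EVf_ex E s t kf u \<and> EVb_ex E s t kb v \<and>
       kf + 1 + kb \<le> k \<and> EVf E s t kf u \<inter> EVb E s t kb v = {}}"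

definition definite :: "('a \<times> 'a) set \<Rightarrow> 'a \<Rightarrow> 'a \<Rightarrow> nat \<Rightarrow> 'a \<Rightarrow> 'a \<Rightarrow> bool" where
  "definite E s t k u v \<longleftrightarrow> (u, v) \<in> E \<and>
     ((u = s \<and> EVb_ex E s t (k - 1) v)
    \<or> (v = t \<and> EVf_ex E s t (k - 1) u)
    \<or> (EVf_ex E s t 1 u \<and> EVb_ex E s t (k - 2) v \<and> u \<notin> EVb E s t (k - 2) v)
    \<or> (EVb_ex E s t 1 v \<and> EVf_ex E s t (k - 2) u \<and> v \<notin> EVf E s t (k - 2) u))"

definition undetermined :: "('a \<times> 'a) set \<Rightarrow> 'a \<Rightarrow> 'a \<Rightarrow> nat \<Rightarrow> 'a \<Rightarrow> 'a \<Rightarrow> bool" where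
  "undetermined E s t k u v \<longleftrightarrow> (u, v) \<in> SPGu_edges E s t k \<and> \<not> definite E s t k u v"

definition In_D :: "('a \<times> 'a) set \<Rightarrow> 'a \<Rightarrow> 'a \<Rightarrow> nat \<Rightarrow> 'a \<Rightarrow> 'a set" where
  "In_D E s t k w = {x. (x, w) \<in> E \<and> distinct [x, w, s, t] \<and>
       (s, x) \<in> SPGu_edges E s t k \<and> (x, w) \<in> SPGu_edges E s t k}"

definition Dep :: "('a \<times> 'a) set \<Rightarrow> 'a \<Rightarrow> 'a \<Rightarrow> nat \<Rightarrow> 'a set" where
  "Dep E s t k = {w. In_D E s t k w \<noteq> {}}"

definition Out_A :: "('a \<times> 'a) set \<Rightarrow> 'a \<Rightarrow> 'a \<Rightarrow> nat \<Rightarrow> 'a \<Rightarrow> 'a set" where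
  "Out_A E s t k w = {y. (w, y) \<in> E \<and> distinct [w, y, s, t] \<and>
       (w, y) \<in> SPGu_edges E s t k \<and> (y, t) \<in> SPGu_edges E s t k}"

definition Arr :: "('a \<times> 'a) set \<Rightarrow> 'a \<Rightarrow> 'a \<Rightarrow> nat \<Rightarrow> 'a set" where
  "Arr E s t k = {w. Out_A E s t k w \<noteq> {}}"

end

theory Submission
  imports Defs
begin

lemma pe_iff: "(a, b) \<in> set (zip p (tl p)) \<longleftrightarrow> (\<exists>xs ys. p = xs @ a # b # ys)"
proof (induction p)
  case Nil then show ?case by simp
next
  case (Cons x p)
  show ?case
  proof
    assume "(a, b) \<in> set (zip (x # p) (tl (x # p)))"
    then have "(a,b) = (x, hd p) \<and> p \<noteq> [] \<or> (a,b) \<in> set (zip p (tl p))"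
      by (cases p) auto
    then show "\<exists>xs ys. x # p = xs @ a # b # ys"
    proof
      assume "(a,b) = (x, hd p) \<and> p \<noteq> []"
      then show ?thesis by (intro exI[of _ "[]"] exI[of _ "tl p"]) auto
    next
      assume "(a,b) \<in> set (zip p (tl p))"
      then obtain xs ys where "p = xs @ a # b # ys" using Cons.IH by blast
      then show ?thesis by (intro exI[of _ "x # xs"] exI[of _ ys]) auto
    qed
  next
    assume "\<exists>xs ys. x # p = xs @ a # b # ys"
    then obtain xs ys where h: "x # p = xs @ a # b # ys" by blast
    show "(a, b) \<in> set (zip (x # p) (tl (x # p)))"
    proof (cases xs)
      case Nil then show ?thesis using h by auto
    next
      case (Cons y xs')
      then have "p = xs' @ a # b # ys" using h by auto
      then have "(a,b) \<in> set (zip p (tl p))" using Cons.IH by blast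
      then show ?thesis by (cases p) auto
    qed
  qed
qed

lemma walk_app: "walk E (xs @ y # ys) \<longleftrightarrow> walk E (xs @ [y]) \<and> walk E (y # ys)"
proof (induction xs)
  case Nil then show ?case by simp
next
  case (Cons x xs) then show ?case by (cases xs) auto
qed

lemma walk_app2: "walk E xs \<Longrightarrow> walk E ys \<Longrightarrow> xs \<noteq> [] \<Longrightarrow> ys \<noteq> [] \<Longrightarrow> (last xs, hd ys) \<in> E \<Longrightarrow> walk E (xs @ ys)"
proof (induction xs)
  case Nil then show ?case by simp
next
  case (Cons x xs) then show ?case by (cases xs; cases ys) auto
qed

lemma walk_appR: "walk E (xs @ ys) \<Longrightarrow> ys \<noteq> [] \<Longrightarrow> walk E ys"
proof (induction xs)
  case Nil then show ?case by simp
next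
  case (Cons x xs) then show ?case by (cases xs) (auto simp del: append.simps, cases ys, auto)
qed

lemma walk_appL: "walk E (xs @ ys) \<Longrightarrow> xs \<noteq> [] \<Longrightarrow> walk E xs"
proof (induction xs)
  case Nil then show ?case by simp
next
  case (Cons x xs) then show ?case by (cases xs) auto
qed

lemma EVf_sub: "is_path E p s u \<Longrightarrow> distinct p \<Longrightarrow> plen p \<le> l \<Longrightarrow> t \<notin> set p \<Longrightarrow> EVf E s t l u \<subseteq> set p"
  unfolding EVf_def by blast

lemma EVb_sub: "is_path E p v t \<Longrightarrow> distinct p \<Longrightarrow> plen p \<le> l \<Longrightarrow> s \<notin> set p \<Longrightarrow> EVb E s t l v \<subseteq> set p"
  unfolding EVb_def by blast

lemma edge_in_SPGu:
  assumes p: "is_path E p s t" "distinct p" "plen p \<le> k" and pe: "p = xs @ a # b # ys"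
  shows "(a, b) \<in> SPGu_edges E s t k"
proof -
  have w: "walk E (xs @ [a])" "walk E (a # b # ys)" using p(1) pe walk_app[of E xs a "b # ys"]
    unfolding is_path_def by auto
  have ab: "(a,b) \<in> E" using w by simp
  have p1: "is_path E (xs @ [a]) s a" using p(1) pe w unfolding is_path_def by (cases xs) auto
  have p2: "is_path E (b # ys) b t" using p(1) pe w unfolding is_path_def by auto
  have tin: "t \<in> set (b # ys)" using p2 unfolding is_path_def by (metis last_in_set list.distinct(1))
  have sin: "s \<in> set (xs @ [a])" using p1 unfolding is_path_def by (metis hd_in_set snoc_eq_iff_butlast)
  have d: "set (xs @ [a]) \<inter> set (b # ys) = {}" using p(2) pe by auto
  have dd: "distinct (xs @ [a])" "distinct (b # ys)" using p(2) pe by auto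
  have tn: "t \<notin> set (xs @ [a])" using d tin by blast
  have sn: "s \<notin> set (b # ys)" using d sin by blast
  have l1: "plen (xs @ [a]) \<le> length xs" "plen (b # ys) \<le> length ys" unfolding plen_def by auto
  have k: "length xs + 1 + length ys \<le> k" using p(3) pe unfolding plen_def by auto
  have e1: "EVf_ex E s t (length xs) a" unfolding EVf_ex_def using p1 dd l1 tn by blast
  have e2: "EVb_ex E s t (length ys) b" unfolding EVb_ex_def using p2 dd l1 sn by blast
  have "EVf E s t (length xs) a \<inter> EVb E s t (length ys) b = {}"
    using EVf_sub[OF p1 dd(1) l1(1) tn] EVb_sub[OF p2 dd(2) l1(2) sn] d by blast
  then show ?thesis unfolding SPGu_edges_def using ab e1 e2 k by blast
qed

theorem theorem5p6:
  fixes E :: "('a \<times> 'a) set" and s t u v :: 'a and k :: nat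
  assumes "s \<noteq> t" and "k \<ge> 5" and "undetermined E s t k u v"
  shows "(u, v) \<in> SPG_edges E s t k \<longleftrightarrow>
    (\<exists>(l::nat) qs. length qs + 3 = l \<and> walk E qs \<and> distinct qs \<and> l - 4 \<le> k - 4 \<and>
       (u, v) \<in> path_edges qs \<and>
       hd qs \<in> Dep E s t k \<and> last qs \<in> Arr E s t k \<and>
       (\<exists>v1 \<in> In_D E s t k (hd qs). \<exists>vl1 \<in> Out_A E s t k (last qs).
          distinct ([s, v1] @ qs @ [vl1, t])))"
proof
  assume "(u, v) \<in> SPG_edges E s t k"
  then obtain p where p: "is_path E p s t" "distinct p" "plen p \<le> k" and
    uv: "(u, v) \<in> path_edges p" unfolding SPG_edges_def by blast
  obtain xs ys where pe: "p = xs @ u # v # ys" using uv pe_iff unfolding path_edges_def by metis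
  have w: "walk E (xs @ [u])" "walk E (u # v # ys)" using p(1) pe walk_app[of E xs u "v # ys"]
    unfolding is_path_def by auto
  have nd: "\<not> definite E s t k u v" using assms(3) unfolding undetermined_def by blast
  have uvE: "(u,v) \<in> E" using w by simp
  have hs: "hd p = s" and lt: "last p = t" using p(1) unfolding is_path_def by auto
  have pv: "is_path E (v # ys) v t" using p(1) pe w unfolding is_path_def by auto
  have pu: "is_path E (xs @ [u]) s u" using p(1) pe w unfolding is_path_def by (cases xs) auto
  have dv: "distinct (v # ys)" "distinct (xs @ [u])" using p(2) pe by auto
  have sv: "s \<notin> set (v # ys)" using p(2) pe hs by (cases xs) auto
  have tu: "t \<notin> set (xs @ [u])" using p(2) pe lt by (cases ys rule: rev_cases) auto
  have len: "length xs + length ys + 1 \<le> k" using p(3) pe unfolding plen_def by simp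
  have xs1: "length xs \<ge> 2"
  proof (rule ccontr)
    assume "\<not> length xs \<ge> 2"
    then consider "xs = []" | x where "xs = [x]" by (cases xs; cases "tl xs") auto
    then show False
    proof cases
      case 1
      then have "u = s" using hs pe by simp
      moreover have "EVb_ex E s t (k - 1) v" unfolding EVb_ex_def using pv dv sv len 1
        by (intro exI[of _ "v # ys"]) (auto simp: plen_def)
      ultimately show False using nd uvE unfolding definite_def by blast
    next
      case (2 x)
      then have xs: "x = s" using hs pe by simp
      have "EVf_ex E s t 1 u" unfolding EVf_ex_def using pu dv tu 2
        by (intro exI[of _ "xs @ [u]"]) (auto simp: plen_def)
      moreover have "EVb_ex E s t (k - 2) v" unfolding EVb_ex_def using pv dv sv len 2
        by (intro exI[of _ "v # ys"]) (auto simp: plen_def)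
      moreover have "u \<notin> EVb E s t (k - 2) v"
      proof -
        have "EVb E s t (k - 2) v \<subseteq> set (v # ys)" using EVb_sub[OF pv dv(1) _ sv] len 2
          by (auto simp: plen_def)
        moreover have "u \<notin> set (v # ys)" using p(2) pe by auto
        ultimately show ?thesis by blast
      qed
      ultimately show False using nd uvE unfolding definite_def by blast
    qed
  qed
  have ys1: "length ys \<ge> 2"
  proof (rule ccontr)
    assume "\<not> length ys \<ge> 2"
    then consider "ys = []" | y where "ys = [y]" by (cases ys; cases "tl ys") auto
    then show False
    proof cases
      case 1
      then have "v = t" using lt pe by simp
      moreover have "EVf_ex E s t (k - 1) u" unfolding EVf_ex_def using pu dv tu len 1
        by (intro exI[of _ "xs @ [u]"]) (auto simp: plen_def)
      ultimately show False using nd uvE unfolding definite_def by blast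
    next
      case (2 y)
      have "EVb_ex E s t 1 v" unfolding EVb_ex_def using pv dv sv 2
        by (intro exI[of _ "v # ys"]) (auto simp: plen_def)
      moreover have "EVf_ex E s t (k - 2) u" unfolding EVf_ex_def using pu dv tu len 2
        by (intro exI[of _ "xs @ [u]"]) (auto simp: plen_def)
      moreover have "v \<notin> EVf E s t (k - 2) u"
      proof -
        have "EVf E s t (k - 2) u \<subseteq> set (xs @ [u])" using EVf_sub[OF pu dv(2) _ tu] len 2
          by (auto simp: plen_def)
        moreover have "v \<notin> set (xs @ [u])" using p(2) pe by auto
        ultimately show ?thesis by blast
      qed
      ultimately show False using nd uvE unfolding definite_def by blast
    qed
  qed
  obtain x0 v1 xs' where xe: "xs = x0 # v1 # xs'" using xs1 by (cases xs; cases "tl xs") auto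
  obtain y0 vl1 ys' where ye: "ys = ys' @ [vl1, y0]" using ys1
    by (cases ys rule: rev_cases; cases "butlast ys" rule: rev_cases) auto
  have x0: "x0 = s" using hs pe xe by simp
  have y0: "y0 = t" using lt pe ye by simp
  define qs where "qs = xs' @ u # v # ys'"
  have pq: "p = [s, v1] @ qs @ [vl1, t]" using pe xe ye x0 y0 qs_def by simp
  have wq: "walk E qs" using p(1) unfolding is_path_def pq qs_def
    using walk_appR[of E "[s, v1]" "qs @ [vl1, t]"] walk_appL[of E qs "[vl1, t]"]
    by (simp add: qs_def)
  have hq: "hd qs = (if xs' = [] then u else hd xs')" unfolding qs_def by simp
  have lq: "last qs = (if ys' = [] then v else last ys')" unfolding qs_def by simp
  have e1: "(s, v1) \<in> SPGu_edges E s t k" using edge_in_SPGu[OF p, of "[]"] pq by simp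
  have e2: "(v1, hd qs) \<in> SPGu_edges E s t k" using edge_in_SPGu[OF p, of "[s]"] pq qs_def
    by (cases xs') auto
  have e3: "(last qs, vl1) \<in> SPGu_edges E s t k"
  proof -
    have qn: "qs \<noteq> []" unfolding qs_def by simp
    have "p = (s # v1 # butlast qs) @ last qs # vl1 # [t]" using pq append_butlast_last_id[OF qn]
      by (metis append.assoc append_Cons append_Nil)
    then show ?thesis using edge_in_SPGu[OF p] by blast
  qed
  have e4: "(vl1, t) \<in> SPGu_edges E s t k"
    using edge_in_SPGu[OF p, of "s # v1 # qs" vl1 t "[]"] pq by simp
  have dp: "distinct ([s, v1] @ qs @ [vl1, t])" using p(2) pq by simp
  have qne: "qs \<noteq> []" unfolding qs_def by simp
  have hin: "hd qs \<in> set qs" "last qs \<in> set qs" using qne by auto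
  have i1: "v1 \<in> In_D E s t k (hd qs)" unfolding In_D_def using e1 e2 dp hin
    unfolding SPGu_edges_def by auto
  have i2: "vl1 \<in> Out_A E s t k (last qs)" unfolding Out_A_def using e3 e4 dp hin
    unfolding SPGu_edges_def by auto
  have "(u, v) \<in> path_edges qs" unfolding path_edges_def pe_iff qs_def by blast
  moreover have "length qs + 3 - 4 \<le> k - 4" using p(3) pq unfolding plen_def by simp
  ultimately show "\<exists>(l::nat) qs. length qs + 3 = l \<and> walk E qs \<and> distinct qs \<and> l - 4 \<le> k - 4 \<and>
       (u, v) \<in> path_edges qs \<and>
       hd qs \<in> Dep E s t k \<and> last qs \<in> Arr E s t k \<and>
       (\<exists>v1 \<in> In_D E s t k (hd qs). \<exists>vl1 \<in> Out_A E s t k (last qs).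
          distinct ([s, v1] @ qs @ [vl1, t]))"
    using wq dp i1 i2 unfolding Dep_def Arr_def by (intro exI[of _ "length qs + 3"] exI[of _ qs]) auto
next
  assume "\<exists>(l::nat) qs. length qs + 3 = l \<and> walk E qs \<and> distinct qs \<and> l - 4 \<le> k - 4 \<and>
       (u, v) \<in> path_edges qs \<and>
       hd qs \<in> Dep E s t k \<and> last qs \<in> Arr E s t k \<and>
       (\<exists>v1 \<in> In_D E s t k (hd qs). \<exists>vl1 \<in> Out_A E s t k (last qs).
          distinct ([s, v1] @ qs @ [vl1, t]))"
  then obtain qs v1 vl1 where q: "walk E qs" "length qs + 3 - 4 \<le> k - 4" "(u, v) \<in> path_edges qs"
    "v1 \<in> In_D E s t k (hd qs)" "vl1 \<in> Out_A E s t k (last qs)"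
    "distinct ([s, v1] @ qs @ [vl1, t])" by blast
  obtain xs ys where qe: "qs = xs @ u # v # ys" using q(3) pe_iff unfolding path_edges_def by metis
  have e: "(s,v1) \<in> E" "(v1, hd qs) \<in> E" "(last qs, vl1) \<in> E" "(vl1, t) \<in> E"
    using q(4,5) unfolding In_D_def Out_A_def SPGu_edges_def by auto
  have wq: "walk E (v1 # qs @ [vl1, t])"
  proof -
    have qn: "qs \<noteq> []" using qe by simp
    have "walk E ([v1] @ qs)" using walk_app2[of E "[v1]" qs] q(1) e qn by simp
    then have "walk E ((v1 # qs) @ [vl1, t])" using walk_app2[of E "v1 # qs" "[vl1, t]"] e qn
      by simp
    then show ?thesis by simp
  qed
  let ?p = "[s, v1] @ qs @ [vl1, t]"
  have "is_path E ?p s t" unfolding is_path_def using wq e by simp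
  moreover have "plen ?p \<le> k" using q(2) assms(2) qe unfolding plen_def by auto
  moreover have "(u,v) \<in> path_edges ?p" unfolding path_edges_def pe_iff
    using qe by (intro exI[of _ "s # v1 # xs"] exI[of _ "ys @ [vl1, t]"]) simp
  ultimately show "(u, v) \<in> SPG_edges E s t k" unfolding SPG_edges_def using q(6) by blast
qed

end
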